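(* Let $a\ge k\ge1$ be integers. For each $\lambda\in\mathrm{SPar}_{a,k}$ let $g_\lambda\in\mathbb Z[y_{k+1},\dots,y_a]$ be any polynomial of the form $$g_\lambda=e_{\bar\lambda-\rho_k}(y_{k+1},\dots,y_a)+\sum_{\nu}d_{\lambda,\nu}\,e_\nu(y_{k+1},\dots,y_a),$$ a finite sum over partitions $\nu$ with $|\nu|=|\bar\lambda-\rho_k|$ and $\nu\triangleright\bar\lambda-\rho_k$, with $d_{\lambda,\nu}\in\mathbb Z$. Then the family $\big(g_\lambda\cdot e_\mu(y_1,\dots,y_a)\big)_{(\lambda,\mu)\in\mathrm{SPar}_{a,k}\times\mathrm{Par}_a}$ is linearly independent over $\mathbb Z$ in $\mathbb Z[y_1,\dots,y_a]$.
   Context: $\mathrm{Par}_a$ is the set of partitions with all parts $\le a$ (including the empty partition); $\mathrm{SPar}_{a,k}$ is the set of strict partitions (pairwise distinct parts) with exactly $k$ parts, all in $\{1,\dots,a\}$. For $\lambda=(\lambda_1>\dots>\lambda_k)\in\mathrm{SPar}_{a,k}$, $\bar\lambda=(\lambda_1-1,\dots,\lambda_k-1)$, $\rho_k=(k-1,k-2,\dots,1,0)$, so $\bar\lambda-\rho_k=(\lambda_1-k,\lambda_2-k+1,\dots,\lambda_k-1)$ is a partition (possibly with zero parts). $e_r$ denotes the $r$-th elementary symmetric polynomial in the indicated variables ($e_0=1$, $e_r=0$ if $r<0$ or $r$ exceeds the number of variables), and for a sequence $\nu=(\nu_1,\nu_2,\dots)$, $e_\nu=\prod_i e_{\nu_i}$.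 $\triangleright$ is strict dominance: $\rho\triangleright\sigma$ iff $\rho\neq\sigma$ and $\rho_1+\dots+\rho_i\ge\sigma_1+\dots+\sigma_i$ for all $i$ (partitions of equal size, zero parts ignored). *)

theory Defs
  imports Main "HOL-Library.Poly_Mapping"
begin

(* Multivariate integer polynomials in variables y_i (i :: nat):
  finitely supported maps from monomials (exponent vectors nat =>0 nat) to coefficients. *)
type_synonym mpoly_int = "(nat \<Rightarrow>\<^sub>0 nat) \<Rightarrow>\<^sub>0 int"

definition Var :: "nat \<Rightarrow> mpoly_int" where
  "Var i = Poly_Mapping.single (Poly_Mapping.single i 1) 1"

definition esym :: "nat set \<Rightarrow> nat \<Rightarrow> mpoly_int" where
  "esym V r = (\<Sum>T\<in>{T. T \<subseteq> V \<and> card T = r}. \<Prod>i\<in>T. Var i)"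

definition esym_seq :: "nat set \<Rightarrow> nat list \<Rightarrow> mpoly_int" where
  "esym_seq V \<nu> = prod_list (map (esym V) \<nu>)"

definition is_partition :: "nat list \<Rightarrow> bool" where
  "is_partition p \<longleftrightarrow> sorted_wrt (\<ge>) p \<and> (\<forall>x\<in>set p. 0 < x)"

definition Par :: "nat \<Rightarrow> nat list set" where
  "Par a = {p. is_partition p \<and> (\<forall>x\<in>set p. x \<le> a)}"

definition SPar :: "nat \<Rightarrow> nat \<Rightarrow> nat list set" where
  "SPar a k = {p. sorted_wrt (>) p \<and> length p = k \<and> (\<forall>x\<in>set p. 1 \<le> x \<and> x \<le> a)}"

(* \<bar>\<lambda> - \<rho>_k = (\<lambda>_1 - k, \<lambda>_2 - k + 1, ..., \<lambda>_k - 1) (0-indexed: \<lambda>_i - (k - i)). *)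
definition shifted :: "nat list \<Rightarrow> nat list" where
  "shifted lam = map (\<lambda>i. lam ! i - (length lam - i)) [0..<length lam]"

definition nonzero_parts :: "nat list \<Rightarrow> nat list" where
  "nonzero_parts p = filter (\<lambda>x. x \<noteq> 0) p"

definition strictly_dominates :: "nat list \<Rightarrow> nat list \<Rightarrow> bool" where
  "strictly_dominates r s \<longleftrightarrow>
     nonzero_parts r \<noteq> nonzero_parts s \<and> sum_list r = sum_list s \<and>
     (\<forall>i. sum_list (take i (nonzero_parts r)) \<ge> sum_list (take i (nonzero_parts s)))"

end

theory Submission
  imports Defs
begin

definition sub0 :: "nat \<Rightarrow> mpoly_int \<Rightarrow> mpoly_int" where
  "sub0 v p = Abs_poly_mapping (\<lambda>m. if Poly_Mapping.lookup m v = 0 then Poly_Mapping.lookup p m else 0)"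

lemma lookup_sub0:
  "Poly_Mapping.lookup (sub0 v p) m = (if Poly_Mapping.lookup m v = 0 then Poly_Mapping.lookup p m else 0)"
proof -
  have "finite {m. (if Poly_Mapping.lookup m v = 0 then Poly_Mapping.lookup p m else 0) \<noteq> 0}"
    by (rule finite_subset[OF _ finite_lookup[of p]]) auto
  then show ?thesis unfolding sub0_def by simp
qed

lemma sub0_add: "sub0 v (p + q) = sub0 v p + sub0 v q"
  by (rule poly_mapping_eqI) (simp add: lookup_sub0 lookup_add)

lemma sub0_zero [simp]: "sub0 v 0 = 0"
  by (rule poly_mapping_eqI) (simp add: lookup_sub0)

lemma sub0_sum: "sub0 v (sum f A) = (\<Sum>x\<in>A. sub0 v (f x))"
  by (induction A rule: infinite_finite_induct) (auto simp: sub0_add)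

lemma sub0_single:
  "sub0 v (Poly_Mapping.single m c) = (if Poly_Mapping.lookup m v = 0 then Poly_Mapping.single m c else 0)"
  by (rule poly_mapping_eqI) (auto simp: lookup_sub0 lookup_single when_def)

lemma poly_expand: "(p::'a \<Rightarrow>\<^sub>0 'b::comm_monoid_add) = (\<Sum>m\<in>Poly_Mapping.keys p. Poly_Mapping.single m (Poly_Mapping.lookup p m))"
proof (rule poly_mapping_eqI)
  fix k
  show "Poly_Mapping.lookup p k = Poly_Mapping.lookup (\<Sum>m\<in>Poly_Mapping.keys p. Poly_Mapping.single m (Poly_Mapping.lookup p m)) k"
    by (cases "k \<in> Poly_Mapping.keys p")
       (auto simp: lookup_sum lookup_single when_def in_keys_iff sum.delta)
qed

lemma sub0_mult: "sub0 v (p * q) = sub0 v p * sub0 v q"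
proof -
  let ?P = "Poly_Mapping.keys p" and ?Q = "Poly_Mapping.keys q"
  have e: "p * q = (\<Sum>m\<in>?P. \<Sum>n\<in>?Q. Poly_Mapping.single m (Poly_Mapping.lookup p m) * Poly_Mapping.single n (Poly_Mapping.lookup q n))"
    by (subst poly_expand[of p], subst poly_expand[of q]) (simp add: sum_product)
  have ep: "sub0 v p = (\<Sum>m\<in>?P. sub0 v (Poly_Mapping.single m (Poly_Mapping.lookup p m)))"
    by (subst poly_expand[of p]) (simp add: sub0_sum)
  have eq: "sub0 v q = (\<Sum>m\<in>?Q. sub0 v (Poly_Mapping.single m (Poly_Mapping.lookup q m)))"
    by (subst poly_expand[of q]) (simp add: sub0_sum)
  show ?thesis
    unfolding e ep eq sum_product sub0_sum
    by (rule sum.cong[OF refl], rule sum.cong[OF refl]) (auto simp: mult_single sub0_single lookup_add)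
qed

lemma sub0_one [simp]: "sub0 v 1 = 1"
  by (metis single_one sub0_single lookup_zero)

lemma sub0_of_int [simp]: "sub0 v (of_int c) = of_int c"
  by (metis single_of_int sub0_single lookup_zero)

lemma sub0_prod: "sub0 v (prod f A) = (\<Prod>x\<in>A. sub0 v (f x))"
  by (induction A rule: infinite_finite_induct) (auto simp: sub0_mult)

lemma sub0_prod_list: "sub0 v (prod_list xs) = prod_list (map (sub0 v) xs)"
  by (induction xs) (auto simp: sub0_mult)

lemma sub0_Var: "sub0 v (Var i) = (if i = v then 0 else Var i)"
  by (auto simp: Var_def sub0_single lookup_single when_def)

lemma Var_nz: "Var i \<noteq> 0"
  by (simp add: Var_def)

lemma prod_Var_nz: "finite V \<Longrightarrow> (\<Prod>i\<in>V. Var i) \<noteq> 0"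
  by (simp add: Var_nz)

lemma esym_sub0:
  assumes "finite V"
  shows "sub0 v (esym V r) = esym (V - {v}) r"
proof -
  have "sub0 v (esym V r) = (\<Sum>T\<in>{T. T \<subseteq> V \<and> card T = r}. if v \<in> T then 0 else \<Prod>i\<in>T. Var i)"
    unfolding esym_def sub0_sum sub0_prod
  proof (rule sum.cong[OF refl])
    fix T assume "T \<in> {T. T \<subseteq> V \<and> card T = r}"
    then have "finite T" using assms finite_subset by blast
    then show "(\<Prod>x\<in>T. sub0 v (Var x)) = (if v \<in> T then 0 else \<Prod>i\<in>T. Var i)"
      by (auto simp: sub0_Var intro: prod.cong)
  qed
  also have "\<dots> = (\<Sum>T\<in>{T. T \<subseteq> V - {v} \<and> card T = r}. \<Prod>i\<in>T. Var i)"
    by (rule sum.mono_neutral_cong_right) (use assms in auto)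
  finally show ?thesis by (simp add: esym_def)
qed

lemma esym_big:
  assumes "finite V" "card V < r"
  shows "esym V r = 0"
proof -
  have e: "{T. T \<subseteq> V \<and> card T = r} = {}"
  proof (rule ccontr)
    assume "{T. T \<subseteq> V \<and> card T = r} \<noteq> {}"
    then obtain T where "T \<subseteq> V" "card T = r" by blast
    then show False using assms card_mono[of V T] by linarith
  qed
  show ?thesis unfolding esym_def e by simp
qed

lemma esym_card:
  assumes "finite V"
  shows "esym V (card V) = (\<Prod>i\<in>V. Var i)"
proof -
  have e: "{T. T \<subseteq> V \<and> card T = card V} = {V}"
    using assms card_subset_eq by (auto intro: card_subset_eq)
  show ?thesis unfolding esym_def e by simp
qed

lemma esym_seq_Nil [simp]: "esym_seq V [] = 1"
  by (simp add: esym_seq_def)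

lemma esym_seq_Cons [simp]: "esym_seq V (x # xs) = esym V x * esym_seq V xs"
  by (simp add: esym_seq_def)

lemma esym_seq_sub0:
  "finite V \<Longrightarrow> sub0 v (esym_seq V p) = esym_seq (V - {v}) p"
  by (induction p) (auto simp: sub0_mult esym_sub0)

lemma esym_seq_big:
  assumes "finite V" "x \<in> set p" "card V < x"
  shows "esym_seq V p = 0"
  using assms(2) by (induction p) (auto simp: esym_big[OF assms(1,3)])


definition box :: "nat \<Rightarrow> nat \<Rightarrow> nat list set" where
  "box k m = {p. is_partition p \<and> length p \<le> k \<and> (\<forall>x\<in>set p. x \<le> m)}"

lemma is_partition_Nil [simp]: "is_partition []"
  by (simp add: is_partition_def)

lemma is_partition_Cons: "is_partition (x # xs) \<longleftrightarrow> (\<forall>y\<in>set xs. y \<le> x) \<and> 0 < x \<and> is_partition xs"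
  by (auto simp: is_partition_def)

lemma Nil_Par [simp]: "[] \<in> Par a"
  by (simp add: Par_def)

lemma Nil_box [simp]: "[] \<in> box k m"
  by (simp add: box_def)

lemma top_elem:
  assumes "is_partition p" "\<forall>x\<in>set p. x \<le> a" "\<not> (\<forall>x\<in>set p. x \<le> a - 1)"
  shows "p = a # tl p \<and> is_partition (tl p)"
proof -
  obtain y where y: "y \<in> set p" "\<not> y \<le> a - 1" using assms(3) by blast
  then have ya: "y = a" using assms(2) by fastforce
  obtain x xs where p: "p = x # xs" using y(1) by (cases p) auto
  have "y \<le> x" using y(1) assms(1) p by (auto simp: is_partition_Cons)
  moreover have "x \<le> a" using assms(2) p by auto
  ultimately show ?thesis using ya p assms(1) by (auto simp: is_partition_Cons)
qed

lemma Par_top: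
  assumes "\<mu> \<in> Par a" "\<mu> \<notin> Par (a - 1)"
  shows "\<mu> = a # tl \<mu> \<and> tl \<mu> \<in> Par a"
proof -
  have "\<mu> = a # tl \<mu> \<and> is_partition (tl \<mu>)"
    using assms by (intro top_elem) (auto simp: Par_def)
  moreover have "\<forall>x\<in>set (tl \<mu>). x \<le> a" using assms(1) by (cases \<mu>) (auto simp: Par_def)
  ultimately show ?thesis by (auto simp: Par_def)
qed

lemma box_top:
  assumes "\<sigma> \<in> box k m" "\<sigma> \<notin> box k (m - 1)"
  shows "\<sigma> = m # tl \<sigma> \<and> tl \<sigma> \<in> box (k - 1) m"
proof -
  have "\<sigma> = m # tl \<sigma> \<and> is_partition (tl \<sigma>)"
    using assms by (intro top_elem) (auto simp: box_def)
  moreover have "\<forall>x\<in>set (tl \<sigma>). x \<le> m" using assms(1) by (cases \<sigma>) (auto simp: box_def)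
  moreover have "length (tl \<sigma>) \<le> k - 1" using assms(1) by (auto simp: box_def)
  ultimately show ?thesis by (auto simp: box_def)
qed

lemma Par_top_big:
  assumes "\<mu> \<in> Par a" "\<mu> \<notin> Par (a - 1)" "finite V" "card V < a"
  shows "esym_seq V \<mu> = 0"
proof -
  have "\<mu> = a # tl \<mu>" using Par_top[OF assms(1,2)] by blast
  then have "a \<in> set \<mu>" by (metis list.set_intros(1))
  then show ?thesis using esym_seq_big[OF assms(3)] assms(4) by blast
qed

lemma box_top_big:
  assumes "\<sigma> \<in> box k m" "\<sigma> \<notin> box k (m - 1)" "finite V" "card V < m"
  shows "esym_seq V \<sigma> = 0"
proof -
  have "\<sigma> = m # tl \<sigma>" using box_top[OF assms(1,2)] by blast
  then have "m \<in> set \<sigma>" by (metis list.set_intros(1))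
  then show ?thesis using esym_seq_big[OF assms(3)] assms(4) by blast
qed

definition rel :: "nat set \<Rightarrow> nat set \<Rightarrow> (nat list \<times> nat list) set \<Rightarrow> (nat list \<Rightarrow> nat list \<Rightarrow> int) \<Rightarrow> bool" where
  "rel X Z S c \<longleftrightarrow> finite S \<and> S \<subseteq> box (card X) (card Z) \<times> Par (card X + card Z) \<and>
     (\<Sum>(\<sigma>,\<mu>)\<in>S. of_int (c \<sigma> \<mu>) * (esym_seq Z \<sigma> * esym_seq (X \<union> Z) \<mu>)) = 0"

definition indep :: "nat set \<Rightarrow> nat set \<Rightarrow> bool" where
  "indep X Z \<longleftrightarrow> (\<forall>S c. rel X Z S c \<longrightarrow> (\<forall>(\<sigma>,\<mu>)\<in>S. c \<sigma> \<mu> = 0))"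

lemma rel_sub0:
  assumes "finite X" "finite Z"
    "(\<Sum>(\<sigma>,\<mu>)\<in>S. of_int (c \<sigma> \<mu>) * (esym_seq Z \<sigma> * esym_seq (X \<union> Z) \<mu>)) = 0"
  shows "(\<Sum>(\<sigma>,\<mu>)\<in>S. of_int (c \<sigma> \<mu>) * (esym_seq (Z - {v}) \<sigma> * esym_seq ((X - {v}) \<union> (Z - {v})) \<mu>)) = 0"
proof -
  have "sub0 v (\<Sum>(\<sigma>,\<mu>)\<in>S. of_int (c \<sigma> \<mu>) * (esym_seq Z \<sigma> * esym_seq (X \<union> Z) \<mu>)) = 0"
    using assms(3) by simp
  moreover have "(X \<union> Z) - {v} = (X - {v}) \<union> (Z - {v})" by blast
  ultimately show ?thesis
    using assms(1,2) by (simp add: sub0_sum sub0_mult esym_seq_sub0 case_prod_beta)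
qed

lemma sum_restrict0:
  assumes "finite S" "S' \<subseteq> S" "\<And>x. x \<in> S \<Longrightarrow> x \<notin> S' \<Longrightarrow> f x = 0"
  shows "sum f S = sum f S'"
  by (rule sum.mono_neutral_right) (use assms in auto)


lemma esym_seq_zero_when:
  "finite V \<Longrightarrow> x \<in> set p \<Longrightarrow> card V < x \<Longrightarrow> esym_seq V p = 0"
  using esym_seq_big by blast

lemma prod_Var_union:
  assumes "finite X" "finite Z" "X \<inter> Z = {}"
  shows "esym (X \<union> Z) (card X + card Z) = esym X (card X) * esym Z (card Z)"
proof -
  have "card (X \<union> Z) = card X + card Z" using assms card_Un_disjoint by blast
  then show ?thesis using assms
    by (metis esym_card finite_UnI prod.union_disjoint)
qed

lemma claimA_deg:
  assumes fX: "finite X" and fZ: "finite Z" and dj: "X \<inter> Z = {}"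
    and IH: "\<And>X' Z'. finite X' \<Longrightarrow> finite Z' \<Longrightarrow> X' \<inter> Z' = {} \<Longrightarrow> card X' + card Z' < card X + card Z \<Longrightarrow> indep X' Z'"
    and R: "rel X Z S c"
    and deg: "X = {} \<or> Z = {}" and apos: "0 < card X + card Z"
  shows "\<forall>(\<sigma>,\<mu>)\<in>S. \<mu> \<in> Par (card X + card Z - 1) \<longrightarrow> c \<sigma> \<mu> = 0"
proof -
  let ?a = "card X + card Z"
  have fS: "finite S" and Ssub: "S \<subseteq> box (card X) (card Z) \<times> Par ?a"
    and sum0: "(\<Sum>(\<sigma>,\<mu>)\<in>S. of_int (c \<sigma> \<mu>) * (esym_seq Z \<sigma> * esym_seq (X \<union> Z) \<mu>)) = 0"
    using R by (auto simp: rel_def)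
  have sNil: "\<sigma> = []" if "(\<sigma>,\<mu>) \<in> S" for \<sigma> \<mu>
  proof -
    have "\<sigma> \<in> box (card X) (card Z)" using that Ssub by auto
    then show ?thesis using deg fX fZ
      by (cases \<sigma>) (auto simp: box_def is_partition_Cons)
  qed
  obtain v where v: "v \<in> X \<union> Z" using apos deg by fastforce
  let ?X = "X - {v}" and ?Z = "Z - {v}"
  have cardv: "card ?X + card ?Z = ?a - 1"
    using v fX fZ dj card_gt_0_iff[of X] card_gt_0_iff[of Z] by (auto simp: card_Diff_singleton_if)
  have s1: "(\<Sum>(\<sigma>,\<mu>)\<in>S. of_int (c \<sigma> \<mu>) * (esym_seq ?Z \<sigma> * esym_seq (?X \<union> ?Z) \<mu>)) = 0"
    by (rule rel_sub0[OF fX fZ sum0])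
  let ?S1 = "S \<inter> (UNIV \<times> Par (?a - 1))"
  have s2: "(\<Sum>(\<sigma>,\<mu>)\<in>?S1. of_int (c \<sigma> \<mu>) * (esym_seq ?Z \<sigma> * esym_seq (?X \<union> ?Z) \<mu>)) = 0"
  proof -
    have "(\<Sum>(\<sigma>,\<mu>)\<in>S. of_int (c \<sigma> \<mu>) * (esym_seq ?Z \<sigma> * esym_seq (?X \<union> ?Z) \<mu>)) =
          (\<Sum>(\<sigma>,\<mu>)\<in>?S1. of_int (c \<sigma> \<mu>) * (esym_seq ?Z \<sigma> * esym_seq (?X \<union> ?Z) \<mu>))"
    proof (rule sum_restrict0[OF fS])
      fix x assume x: "x \<in> S" "x \<notin> ?S1"
      obtain \<sigma> \<mu> where xe: "x = (\<sigma>, \<mu>)" by fastforce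
      have "\<mu> \<in> Par ?a" "\<mu> \<notin> Par (?a - 1)" using x xe Ssub by auto
      moreover have "card (?X \<union> ?Z) < ?a"
        using cardv apos card_Un_le[of ?X ?Z] by linarith
      ultimately have "esym_seq (?X \<union> ?Z) \<mu> = 0"
        by (intro Par_top_big) (use fX fZ in auto)
      then show "(case x of (\<sigma>,\<mu>) \<Rightarrow> of_int (c \<sigma> \<mu>) * (esym_seq ?Z \<sigma> * esym_seq (?X \<union> ?Z) \<mu>)) = 0"
        using xe by simp
    qed auto
    then show ?thesis using s1 by simp
  qed
  have "rel ?X ?Z ?S1 c"
    unfolding rel_def
  proof (intro conjI)
    show "finite ?S1" using fS by simp
    show "?S1 \<subseteq> box (card ?X) (card ?Z) \<times> Par (card ?X + card ?Z)"
    proof (rule subsetI)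
      fix x assume x: "x \<in> ?S1"
      obtain \<sigma> \<mu> where xe: "x = (\<sigma>, \<mu>)" by fastforce
      have "\<sigma> = []" using sNil x xe by blast
      then show "x \<in> box (card ?X) (card ?Z) \<times> Par (card ?X + card ?Z)"
        using x xe cardv by simp
    qed
    show "(\<Sum>(\<sigma>,\<mu>)\<in>?S1. of_int (c \<sigma> \<mu>) * (esym_seq ?Z \<sigma> * esym_seq (?X \<union> ?Z) \<mu>)) = 0"
      by (rule s2)
  qed
  moreover have "indep ?X ?Z"
    using IH[of ?X ?Z] fX fZ dj cardv apos by auto
  ultimately have "\<forall>(\<sigma>,\<mu>)\<in>?S1. c \<sigma> \<mu> = 0" by (auto simp: indep_def)
  then show ?thesis by auto
qed



lemma claimA_main:
  assumes fX: "finite X" and fZ: "finite Z" and dj: "X \<inter> Z = {}"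
    and IH: "\<And>X' Z'. finite X' \<Longrightarrow> finite Z' \<Longrightarrow> X' \<inter> Z' = {} \<Longrightarrow> card X' + card Z' < card X + card Z \<Longrightarrow> indep X' Z'"
    and R: "rel X Z S c"
    and xX: "x \<in> X" and zZ: "z \<in> Z"
  shows "\<forall>(\<sigma>,\<mu>)\<in>S. \<mu> \<in> Par (card X + card Z - 1) \<longrightarrow> c \<sigma> \<mu> = 0"
proof -
  let ?k = "card X" and ?m = "card Z"
  let ?a = "card X + card Z"
  let ?Y = "X \<union> Z"
  have kpos: "0 < ?k" using xX fX card_gt_0_iff by blast
  have mpos: "0 < ?m" using zZ fZ card_gt_0_iff by blast
  have fS: "finite S" and Ssub: "S \<subseteq> box ?k ?m \<times> Par ?a"
    and sum0: "(\<Sum>(\<sigma>,\<mu>)\<in>S. of_int (c \<sigma> \<mu>) * (esym_seq Z \<sigma> * esym_seq ?Y \<mu>)) = 0"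
    using R by (auto simp: rel_def)
  have xZ: "x \<notin> Z" and zX: "z \<notin> X" using xX zZ dj by auto
  have fY: "finite ?Y" using fX fZ by simp
  have cY: "card ?Y = ?a" using fX fZ dj card_Un_disjoint by blast
  let ?Z1 = "Z - {z}"
  have cZ1: "card ?Z1 = ?m - 1" using zZ fZ by simp
  let ?S1 = "S \<inter> (box ?k (?m - 1) \<times> Par (?a - 1))"
  have step1: "\<forall>(\<sigma>,\<mu>)\<in>?S1. c \<sigma> \<mu> = 0"
  proof -
    have s1: "(\<Sum>(\<sigma>,\<mu>)\<in>S. of_int (c \<sigma> \<mu>) * (esym_seq ?Z1 \<sigma> * esym_seq (X \<union> ?Z1) \<mu>)) = 0"
      using rel_sub0[OF fX fZ sum0, of z] zX by simp
    have "(\<Sum>(\<sigma>,\<mu>)\<in>S. of_int (c \<sigma> \<mu>) * (esym_seq ?Z1 \<sigma> * esym_seq (X \<union> ?Z1) \<mu>)) =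
          (\<Sum>(\<sigma>,\<mu>)\<in>?S1. of_int (c \<sigma> \<mu>) * (esym_seq ?Z1 \<sigma> * esym_seq (X \<union> ?Z1) \<mu>))"
    proof (rule sum_restrict0[OF fS])
      fix y assume y: "y \<in> S" "y \<notin> ?S1"
      obtain \<sigma> \<mu> where ye: "y = (\<sigma>, \<mu>)" by fastforce
      have sb: "\<sigma> \<in> box ?k ?m" and mP: "\<mu> \<in> Par ?a" using y ye Ssub by auto
      have "esym_seq ?Z1 \<sigma> = 0 \<or> esym_seq (X \<union> ?Z1) \<mu> = 0"
      proof (cases "\<sigma> \<in> box ?k (?m - 1)")
        case True
        then have "\<mu> \<notin> Par (?a - 1)" using y ye by auto
        moreover have "card (X \<union> ?Z1) < ?a"
          using card_Un_le[of X ?Z1] cZ1 mpos by linarith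
        ultimately have "esym_seq (X \<union> ?Z1) \<mu> = 0"
          by (intro Par_top_big[OF mP]) (use fX fZ in auto)
        then show ?thesis by blast
      next
        case False
        have "esym_seq ?Z1 \<sigma> = 0"
          by (rule box_top_big[OF sb False]) (use fZ cZ1 mpos in auto)
        then show ?thesis by blast
      qed
      then show "(case y of (\<sigma>,\<mu>) \<Rightarrow> of_int (c \<sigma> \<mu>) * (esym_seq ?Z1 \<sigma> * esym_seq (X \<union> ?Z1) \<mu>)) = 0"
        using ye by auto
    qed auto
    then have s2: "(\<Sum>(\<sigma>,\<mu>)\<in>?S1. of_int (c \<sigma> \<mu>) * (esym_seq ?Z1 \<sigma> * esym_seq (X \<union> ?Z1) \<mu>)) = 0"
      using s1 by simp
    have "rel X ?Z1 ?S1 c"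
      unfolding rel_def using fS s2 cZ1 mpos by auto
    moreover have "indep X ?Z1"
      using IH[of X ?Z1] fX fZ dj cZ1 mpos by auto
    ultimately show ?thesis by (auto simp: indep_def)
  qed
  let ?S2 = "S - ?S1"
  define T where "T \<sigma> \<mu> = (if \<sigma> \<in> box ?k (?m - 1) then esym X ?k * (esym_seq Z \<sigma> * esym_seq ?Y (tl \<mu>))
                              else esym_seq Z (tl \<sigma>) * esym_seq ?Y \<mu>)" for \<sigma> \<mu>
  have fact2: "esym_seq Z \<sigma> * esym_seq ?Y \<mu> = esym Z ?m * T \<sigma> \<mu>" if "(\<sigma>,\<mu>) \<in> ?S2" for \<sigma> \<mu>
  proof -
    have sb: "\<sigma> \<in> box ?k ?m" and mP: "\<mu> \<in> Par ?a" using that Ssub by auto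
    show ?thesis
    proof (cases "\<sigma> \<in> box ?k (?m - 1)")
      case True
      then have "\<mu> \<notin> Par (?a - 1)" using that by auto
      then have "\<mu> = ?a # tl \<mu>" using Par_top[OF mP] by blast
      then have "esym_seq ?Y \<mu> = esym ?Y ?a * esym_seq ?Y (tl \<mu>)"
        by (metis esym_seq_Cons)
      also have "esym ?Y ?a = esym X ?k * esym Z ?m"
        by (rule prod_Var_union[OF fX fZ dj])
      finally show ?thesis using True unfolding T_def by (simp add: ac_simps)
    next
      case False
      then have "\<sigma> = ?m # tl \<sigma>" using box_top[OF sb] by blast
      then have "esym_seq Z \<sigma> = esym Z ?m * esym_seq Z (tl \<sigma>)"
        by (metis esym_seq_Cons)
      then show ?thesis using False unfolding T_def by (simp add: ac_simps)
    qed
  qed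
  have sumS2: "(\<Sum>(\<sigma>,\<mu>)\<in>?S2. of_int (c \<sigma> \<mu>) * T \<sigma> \<mu>) = 0"
  proof -
    have "(\<Sum>(\<sigma>,\<mu>)\<in>S. of_int (c \<sigma> \<mu>) * (esym_seq Z \<sigma> * esym_seq ?Y \<mu>)) =
          (\<Sum>(\<sigma>,\<mu>)\<in>?S2. of_int (c \<sigma> \<mu>) * (esym_seq Z \<sigma> * esym_seq ?Y \<mu>))"
    proof (rule sum_restrict0[OF fS])
      fix y assume "y \<in> S" "y \<notin> ?S2"
      then have y1: "y \<in> ?S1" by blast
      obtain \<sigma> \<mu> where ye: "y = (\<sigma>, \<mu>)" by fastforce
      have "c \<sigma> \<mu> = 0" using step1 y1 ye by fastforce
      then show "(case y of (\<sigma>,\<mu>) \<Rightarrow> of_int (c \<sigma> \<mu>) * (esym_seq Z \<sigma> * esym_seq ?Y \<mu>)) = 0"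
        using ye by simp
    qed auto
    also have "\<dots> = (\<Sum>(\<sigma>,\<mu>)\<in>?S2. esym Z ?m * (of_int (c \<sigma> \<mu>) * T \<sigma> \<mu>))"
    proof (rule sum.cong[OF refl])
      fix y assume y: "y \<in> ?S2"
      obtain \<sigma> \<mu> where ye: "y = (\<sigma>, \<mu>)" by fastforce
      have "esym_seq Z \<sigma> * esym_seq ?Y \<mu> = esym Z ?m * T \<sigma> \<mu>"
        using fact2 y ye by blast
      then show "(case y of (\<sigma>,\<mu>) \<Rightarrow> of_int (c \<sigma> \<mu>) * (esym_seq Z \<sigma> * esym_seq ?Y \<mu>)) =
          (case y of (\<sigma>,\<mu>) \<Rightarrow> esym Z ?m * (of_int (c \<sigma> \<mu>) * T \<sigma> \<mu>))"
        using ye by (simp add: ac_simps)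
    qed
    also have "\<dots> = esym Z ?m * (\<Sum>(\<sigma>,\<mu>)\<in>?S2. of_int (c \<sigma> \<mu>) * T \<sigma> \<mu>)"
      by (simp add: sum_distrib_left case_prod_beta)
    finally have "esym Z ?m * (\<Sum>(\<sigma>,\<mu>)\<in>?S2. of_int (c \<sigma> \<mu>) * T \<sigma> \<mu>) = 0"
      using sum0 by simp
    moreover have "esym Z ?m \<noteq> 0" using esym_card[OF fZ] prod_Var_nz[OF fZ] by simp
    ultimately show ?thesis by simp
  qed
  let ?X1 = "X - {x}"
  have cX1: "card ?X1 = ?k - 1" using xX fX by simp
  have Yx: "?Y - {x} = ?X1 \<union> Z" using xZ by blast
  have subT: "sub0 x (T \<sigma> \<mu>) = (if \<sigma> \<in> box ?k (?m - 1) then 0 else esym_seq Z (tl \<sigma>) * esym_seq (?X1 \<union> Z) \<mu>)"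
    for \<sigma> \<mu>
  proof -
    have "sub0 x (esym X ?k) = 0"
      using esym_sub0[OF fX] esym_big[of ?X1 ?k] fX cX1 kpos by simp
    moreover have "sub0 x (esym_seq Z p) = esym_seq Z p" for p
      using esym_seq_sub0[OF fZ] xZ by simp
    moreover have "sub0 x (esym_seq ?Y p) = esym_seq (?X1 \<union> Z) p" for p
      using esym_seq_sub0[OF fY] Yx by simp
    ultimately show ?thesis unfolding T_def by (simp add: sub0_mult)
  qed
  let ?S3 = "{y \<in> ?S2. fst y \<notin> box ?k (?m - 1) \<and> snd y \<in> Par (?a - 1)}"
  have fS3: "finite ?S3" using fS by simp
  have s3: "(\<Sum>(\<sigma>,\<mu>)\<in>?S3. of_int (c \<sigma> \<mu>) * (esym_seq Z (tl \<sigma>) * esym_seq (?X1 \<union> Z) \<mu>)) = 0"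
  proof -
    have "sub0 x (\<Sum>(\<sigma>,\<mu>)\<in>?S2. of_int (c \<sigma> \<mu>) * T \<sigma> \<mu>) = 0" using sumS2 by simp
    then have "(\<Sum>(\<sigma>,\<mu>)\<in>?S2. of_int (c \<sigma> \<mu>) * sub0 x (T \<sigma> \<mu>)) = 0"
      by (simp add: sub0_sum sub0_mult case_prod_beta)
    also have "(\<Sum>(\<sigma>,\<mu>)\<in>?S2. of_int (c \<sigma> \<mu>) * sub0 x (T \<sigma> \<mu>)) =
               (\<Sum>(\<sigma>,\<mu>)\<in>?S3. of_int (c \<sigma> \<mu>) * sub0 x (T \<sigma> \<mu>))"
    proof (rule sum_restrict0)
      show "finite ?S2" using fS by simp
      fix y assume y: "y \<in> ?S2" "y \<notin> ?S3"
      obtain \<sigma> \<mu> where ye: "y = (\<sigma>, \<mu>)" by fastforce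
      have mP: "\<mu> \<in> Par ?a" using y ye Ssub by auto
      have "sub0 x (T \<sigma> \<mu>) = 0"
      proof (cases "\<sigma> \<in> box ?k (?m - 1)")
        case True then show ?thesis by (simp add: subT)
      next
        case False
        then have "\<mu> \<notin> Par (?a - 1)" using y ye by auto
        moreover have "card (?X1 \<union> Z) < ?a"
          using card_Un_le[of ?X1 Z] cX1 kpos by linarith
        ultimately have "esym_seq (?X1 \<union> Z) \<mu> = 0"
          by (intro Par_top_big[OF mP]) (use fX fZ in auto)
        then show ?thesis by (simp add: subT)
      qed
      then show "(case y of (\<sigma>,\<mu>) \<Rightarrow> of_int (c \<sigma> \<mu>) * sub0 x (T \<sigma> \<mu>)) = 0"
        using ye by simp
    qed auto
    also have "\<dots> = (\<Sum>(\<sigma>,\<mu>)\<in>?S3. of_int (c \<sigma> \<mu>) * (esym_seq Z (tl \<sigma>) * esym_seq (?X1 \<union> Z) \<mu>))"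
      by (rule sum.cong[OF refl]) (auto simp: subT)
    finally show ?thesis .
  qed
  define h where "h y = (tl (fst y), snd y)" for y :: "nat list \<times> nat list"
  define c' where "c' \<sigma>' \<mu> = c (?m # \<sigma>') \<mu>" for \<sigma>' \<mu>
  have S3top: "\<sigma> = ?m # tl \<sigma> \<and> tl \<sigma> \<in> box (?k - 1) ?m" if "(\<sigma>,\<mu>) \<in> ?S3" for \<sigma> \<mu>
    using that Ssub box_top by auto
  have injh: "inj_on h ?S3"
  proof (rule inj_onI)
    fix y1 y2 assume "y1 \<in> ?S3" "y2 \<in> ?S3" "h y1 = h y2"
    then show "y1 = y2" using S3top unfolding h_def
      by (metis (no_types, lifting) prod.collapse prod.inject)
  qed
  have "rel ?X1 Z (h ` ?S3) c'"
    unfolding rel_def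
  proof (intro conjI)
    show "finite (h ` ?S3)" using fS3 by simp
    show "h ` ?S3 \<subseteq> box (card ?X1) (card Z) \<times> Par (card ?X1 + card Z)"
    proof
      fix w assume "w \<in> h ` ?S3"
      then obtain y where y: "y \<in> ?S3" "w = h y" by blast
      obtain \<sigma> \<mu> where ye: "y = (\<sigma>, \<mu>)" by fastforce
      have w: "w = h (\<sigma>,\<mu>)" "(\<sigma>,\<mu>) \<in> ?S3" using y ye by auto
      have "?a - 1 = card ?X1 + card Z" using cX1 kpos by simp
      then show "w \<in> box (card ?X1) (card Z) \<times> Par (card ?X1 + card Z)"
        using w S3top[OF w(2)] cX1 by (auto simp: h_def)
    qed
    have "(\<Sum>(\<sigma>,\<mu>)\<in>h ` ?S3. of_int (c' \<sigma> \<mu>) * (esym_seq Z \<sigma> * esym_seq (?X1 \<union> Z) \<mu>)) =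
          (\<Sum>(\<sigma>,\<mu>)\<in>?S3. of_int (c \<sigma> \<mu>) * (esym_seq Z (tl \<sigma>) * esym_seq (?X1 \<union> Z) \<mu>))"
      unfolding sum.reindex[OF injh]
    proof (rule sum.cong[OF refl])
      fix y assume y: "y \<in> ?S3"
      obtain \<sigma> \<mu> where ye: "y = (\<sigma>, \<mu>)" by fastforce
      have eq: "\<sigma> = ?m # tl \<sigma>" using S3top[of \<sigma> \<mu>] y ye by blast
      have "c' (tl \<sigma>) \<mu> = c \<sigma> \<mu>" unfolding c'_def
        by (rule arg_cong[where f="\<lambda>s. c s \<mu>", OF eq[symmetric]])
      then show "((\<lambda>(\<sigma>,\<mu>). of_int (c' \<sigma> \<mu>) * (esym_seq Z \<sigma> * esym_seq (?X1 \<union> Z) \<mu>)) \<circ> h) y =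
          (case y of (\<sigma>,\<mu>) \<Rightarrow> of_int (c \<sigma> \<mu>) * (esym_seq Z (tl \<sigma>) * esym_seq (?X1 \<union> Z) \<mu>))"
        using ye by (simp add: h_def)
    qed
    then show "(\<Sum>(\<sigma>,\<mu>)\<in>h ` ?S3. of_int (c' \<sigma> \<mu>) * (esym_seq Z \<sigma> * esym_seq (?X1 \<union> Z) \<mu>)) = 0"
      using s3 by simp
  qed
  moreover have "indep ?X1 Z"
    using IH[of ?X1 Z] fX fZ dj cX1 kpos by auto
  ultimately have z3: "\<forall>(\<sigma>,\<mu>)\<in>h ` ?S3. c' \<sigma> \<mu> = 0" by (auto simp: indep_def)
  have step3: "c \<sigma> \<mu> = 0" if "(\<sigma>,\<mu>) \<in> ?S3" for \<sigma> \<mu>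
  proof -
    have "h (\<sigma>,\<mu>) \<in> h ` ?S3" using that by blast
    then have "c' (tl \<sigma>) \<mu> = 0" using z3 by (auto simp: h_def)
    moreover have eq: "\<sigma> = ?m # tl \<sigma>" using S3top[OF that] by blast
    moreover have "c' (tl \<sigma>) \<mu> = c \<sigma> \<mu>" unfolding c'_def
      by (rule arg_cong[where f="\<lambda>s. c s \<mu>", OF eq[symmetric]])
    ultimately show ?thesis by simp
  qed
  show ?thesis
  proof (intro ballI)
    fix y assume y: "y \<in> S"
    obtain \<sigma> \<mu> where ye: "y = (\<sigma>,\<mu>)" by fastforce
    have "\<mu> \<in> Par (?a - 1) \<longrightarrow> c \<sigma> \<mu> = 0"
    proof
      assume mP: "\<mu> \<in> Par (?a - 1)"
      show "c \<sigma> \<mu> = 0"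
      proof (cases "\<sigma> \<in> box ?k (?m - 1)")
        case True
        then have "(\<sigma>,\<mu>) \<in> ?S1" using y ye Ssub mP by auto
        then show ?thesis using step1 by auto
      next
        case False
        then have "(\<sigma>,\<mu>) \<in> ?S3" using y ye mP by auto
        then show ?thesis using step3 by auto
      qed
    qed
    then show "case y of (\<sigma>,\<mu>) \<Rightarrow> \<mu> \<in> Par (?a - 1) \<longrightarrow> c \<sigma> \<mu> = 0"
      using ye by simp
  qed
qed


lemma Par_0: "Par 0 = {[]}"
proof -
  have "p = []" if "p \<in> Par 0" for p
    using that by (cases p) (auto simp: Par_def is_partition_Cons)
  then show ?thesis by auto
qed

lemma claimA:
  assumes fX: "finite X" and fZ: "finite Z" and dj: "X \<inter> Z = {}"
    and IH: "\<And>X' Z'. finite X' \<Longrightarrow> finite Z' \<Longrightarrow> X' \<inter> Z' = {} \<Longrightarrow> card X' + card Z' < card X + card Z \<Longrightarrow> indep X' Z'"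
    and R: "rel X Z S c"
  shows "\<forall>(\<sigma>,\<mu>)\<in>S. \<mu> \<in> Par (card X + card Z - 1) \<longrightarrow> c \<sigma> \<mu> = 0"
proof (cases "X \<noteq> {} \<and> Z \<noteq> {}")
  case True
  then obtain x z where "x \<in> X" "z \<in> Z" by blast
  then show ?thesis using claimA_main[OF fX fZ dj IH R] by blast
next
  case False
  show ?thesis
  proof (cases "0 < card X + card Z")
    case True
    show ?thesis
    proof (rule claimA_deg[where X=X and Z=Z and S=S and c=c])
      show "finite X" "finite Z" "X \<inter> Z = {}" "rel X Z S c" "0 < card X + card Z"
        using fX fZ dj R True by auto
      show "X = {} \<or> Z = {}" using False by blast
      show "\<And>X' Z'. finite X' \<Longrightarrow> finite Z' \<Longrightarrow> X' \<inter> Z' = {} \<Longrightarrow> card X' + card Z' < card X + card Z \<Longrightarrow> indep X' Z'"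
        by (rule IH)
    qed
  next
    case a0: False
    then have XZ: "X = {}" "Z = {}" using fX fZ by auto
    have fS: "finite S" and Ssub: "S \<subseteq> box 0 0 \<times> Par 0"
      and sum0: "(\<Sum>(\<sigma>,\<mu>)\<in>S. of_int (c \<sigma> \<mu>) * (esym_seq Z \<sigma> * esym_seq (X \<union> Z) \<mu>)) = 0"
      using R XZ by (auto simp: rel_def)
    have b00: "box 0 0 = {[]}" by (auto simp: box_def)
    have "S \<subseteq> {([],[])}" using Ssub b00 Par_0 by auto
    then have "S = {} \<or> S = {([],[])}" by blast
    then show ?thesis
    proof
      assume "S = {}" then show ?thesis by simp
    next
      assume Se: "S = {([],[])}"
      then have "(of_int (c [] []) :: mpoly_int) = 0" using sum0 by simp
      then show ?thesis using Se by simp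
    qed
  qed
qed

lemma inner:
  assumes fX: "finite X" and fZ: "finite Z" and dj: "X \<inter> Z = {}"
    and IH: "\<And>X' Z'. finite X' \<Longrightarrow> finite Z' \<Longrightarrow> X' \<inter> Z' = {} \<Longrightarrow> card X' + card Z' < card X + card Z \<Longrightarrow> indep X' Z'"
  shows "rel X Z S c \<Longrightarrow> \<forall>(\<sigma>,\<mu>)\<in>S. length \<mu> \<le> n \<Longrightarrow> \<forall>(\<sigma>,\<mu>)\<in>S. c \<sigma> \<mu> = 0"
proof (induction n arbitrary: S c)
  case 0
  have A: "\<forall>(\<sigma>,\<mu>)\<in>S. \<mu> \<in> Par (card X + card Z - 1) \<longrightarrow> c \<sigma> \<mu> = 0"
    by (rule claimA[OF fX fZ dj IH 0(1)])
  show ?case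
  proof (intro ballI)
    fix y assume y: "y \<in> S"
    obtain \<sigma> \<mu> where ye: "y = (\<sigma>,\<mu>)" by fastforce
    have "\<mu> = []" using 0(2) y ye by auto
    then show "case y of (\<sigma>,\<mu>) \<Rightarrow> c \<sigma> \<mu> = 0" using A y ye by auto
  qed
next
  case (Suc n)
  let ?a = "card X + card Z"
  let ?Y = "X \<union> Z"
  have R: "rel X Z S c" by fact
  have fS: "finite S" and Ssub: "S \<subseteq> box (card X) (card Z) \<times> Par ?a"
    and sum0: "(\<Sum>(\<sigma>,\<mu>)\<in>S. of_int (c \<sigma> \<mu>) * (esym_seq Z \<sigma> * esym_seq ?Y \<mu>)) = 0"
    using R by (auto simp: rel_def)
  have fY: "finite ?Y" using fX fZ by simp
  have cY: "card ?Y = ?a" using fX fZ dj card_Un_disjoint by blast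
  have A: "\<forall>(\<sigma>,\<mu>)\<in>S. \<mu> \<in> Par (?a - 1) \<longrightarrow> c \<sigma> \<mu> = 0"
    by (rule claimA[OF fX fZ dj IH R])
  let ?S4 = "{y \<in> S. snd y \<notin> Par (?a - 1)}"
  have top4: "\<mu> = ?a # tl \<mu> \<and> tl \<mu> \<in> Par ?a" if "(\<sigma>,\<mu>) \<in> ?S4" for \<sigma> \<mu>
    using that Ssub Par_top by auto
  have s4: "(\<Sum>(\<sigma>,\<mu>)\<in>?S4. of_int (c \<sigma> \<mu>) * (esym_seq Z \<sigma> * esym_seq ?Y (tl \<mu>))) = 0"
  proof -
    have "(\<Sum>(\<sigma>,\<mu>)\<in>S. of_int (c \<sigma> \<mu>) * (esym_seq Z \<sigma> * esym_seq ?Y \<mu>)) =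
          (\<Sum>(\<sigma>,\<mu>)\<in>?S4. of_int (c \<sigma> \<mu>) * (esym_seq Z \<sigma> * esym_seq ?Y \<mu>))"
    proof (rule sum_restrict0[OF fS])
      fix y assume y: "y \<in> S" "y \<notin> ?S4"
      obtain \<sigma> \<mu> where ye: "y = (\<sigma>, \<mu>)" by fastforce
      have "c \<sigma> \<mu> = 0" using A y ye by auto
      then show "(case y of (\<sigma>,\<mu>) \<Rightarrow> of_int (c \<sigma> \<mu>) * (esym_seq Z \<sigma> * esym_seq ?Y \<mu>)) = 0"
        using ye by simp
    qed auto
    also have "\<dots> = (\<Sum>(\<sigma>,\<mu>)\<in>?S4. esym ?Y ?a * (of_int (c \<sigma> \<mu>) * (esym_seq Z \<sigma> * esym_seq ?Y (tl \<mu>))))"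
    proof (rule sum.cong[OF refl])
      fix y assume y: "y \<in> ?S4"
      obtain \<sigma> \<mu> where ye: "y = (\<sigma>, \<mu>)" by fastforce
      have "\<mu> = ?a # tl \<mu>" using top4 y ye by blast
      then have "esym_seq ?Y \<mu> = esym ?Y ?a * esym_seq ?Y (tl \<mu>)"
        by (metis esym_seq_Cons)
      then show "(case y of (\<sigma>,\<mu>) \<Rightarrow> of_int (c \<sigma> \<mu>) * (esym_seq Z \<sigma> * esym_seq ?Y \<mu>)) =
          (case y of (\<sigma>,\<mu>) \<Rightarrow> esym ?Y ?a * (of_int (c \<sigma> \<mu>) * (esym_seq Z \<sigma> * esym_seq ?Y (tl \<mu>))))"
        using ye by (simp add: ac_simps)
    qed
    also have "\<dots> = esym ?Y ?a * (\<Sum>(\<sigma>,\<mu>)\<in>?S4. of_int (c \<sigma> \<mu>) * (esym_seq Z \<sigma> * esym_seq ?Y (tl \<mu>)))"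
      by (simp add: sum_distrib_left case_prod_beta)
    finally have "esym ?Y ?a * (\<Sum>(\<sigma>,\<mu>)\<in>?S4. of_int (c \<sigma> \<mu>) * (esym_seq Z \<sigma> * esym_seq ?Y (tl \<mu>))) = 0"
      using sum0 by simp
    moreover have "esym ?Y ?a \<noteq> 0" using esym_card[OF fY] prod_Var_nz[OF fY] cY by simp
    ultimately show ?thesis by simp
  qed
  define h where "h y = (fst y, tl (snd y))" for y :: "nat list \<times> nat list"
  define c' where "c' \<sigma> \<mu>' = c \<sigma> (?a # \<mu>')" for \<sigma> \<mu>'
  have injh: "inj_on h ?S4"
  proof (rule inj_onI)
    fix y1 y2 assume "y1 \<in> ?S4" "y2 \<in> ?S4" "h y1 = h y2"
    then show "y1 = y2" using top4 unfolding h_def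
      by (metis (no_types, lifting) prod.collapse prod.inject)
  qed
  have cc: "c' \<sigma> (tl \<mu>) = c \<sigma> \<mu>" if "(\<sigma>,\<mu>) \<in> ?S4" for \<sigma> \<mu>
  proof -
    have eq: "\<mu> = ?a # tl \<mu>" using top4[OF that] by blast
    show ?thesis unfolding c'_def
      by (rule arg_cong[where f="\<lambda>s. c \<sigma> s", OF eq[symmetric]])
  qed
  have R': "rel X Z (h ` ?S4) c'"
    unfolding rel_def
  proof (intro conjI)
    show "finite (h ` ?S4)" using fS by simp
    show "h ` ?S4 \<subseteq> box (card X) (card Z) \<times> Par ?a"
    proof
      fix w assume "w \<in> h ` ?S4"
      then obtain y where y: "y \<in> ?S4" "w = h y" by blast
      obtain \<sigma> \<mu> where ye: "y = (\<sigma>, \<mu>)" by fastforce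
      show "w \<in> box (card X) (card Z) \<times> Par ?a"
        using y ye top4[of \<sigma> \<mu>] Ssub by (auto simp: h_def)
    qed
    have "(\<Sum>(\<sigma>,\<mu>)\<in>h ` ?S4. of_int (c' \<sigma> \<mu>) * (esym_seq Z \<sigma> * esym_seq ?Y \<mu>)) =
          (\<Sum>(\<sigma>,\<mu>)\<in>?S4. of_int (c \<sigma> \<mu>) * (esym_seq Z \<sigma> * esym_seq ?Y (tl \<mu>)))"
      unfolding sum.reindex[OF injh]
    proof (rule sum.cong[OF refl])
      fix y assume y: "y \<in> ?S4"
      obtain \<sigma> \<mu> where ye: "y = (\<sigma>, \<mu>)" by fastforce
      have "c' \<sigma> (tl \<mu>) = c \<sigma> \<mu>" using cc y ye by blast
      then show "((\<lambda>(\<sigma>,\<mu>). of_int (c' \<sigma> \<mu>) * (esym_seq Z \<sigma> * esym_seq ?Y \<mu>)) \<circ> h) y =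
          (case y of (\<sigma>,\<mu>) \<Rightarrow> of_int (c \<sigma> \<mu>) * (esym_seq Z \<sigma> * esym_seq ?Y (tl \<mu>)))"
        using ye by (simp add: h_def)
    qed
    then show "(\<Sum>(\<sigma>,\<mu>)\<in>h ` ?S4. of_int (c' \<sigma> \<mu>) * (esym_seq Z \<sigma> * esym_seq ?Y \<mu>)) = 0"
      using s4 by simp
  qed
  have len': "\<forall>(\<sigma>,\<mu>)\<in>h ` ?S4. length \<mu> \<le> n"
  proof
    fix w assume "w \<in> h ` ?S4"
    then obtain y where y: "y \<in> ?S4" "w = h y" by blast
    obtain \<sigma> \<mu> where ye: "y = (\<sigma>, \<mu>)" by fastforce
    have "length \<mu> \<le> Suc n" using Suc.prems(2) y ye by auto
    then show "case w of (\<sigma>,\<mu>) \<Rightarrow> length \<mu> \<le> n" using y ye by (simp add: h_def)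
  qed
  have z4: "\<forall>(\<sigma>,\<mu>)\<in>h ` ?S4. c' \<sigma> \<mu> = 0" by (rule Suc.IH[OF R' len'])
  show ?case
  proof (intro ballI)
    fix y assume y: "y \<in> S"
    obtain \<sigma> \<mu> where ye: "y = (\<sigma>,\<mu>)" by fastforce
    have "c \<sigma> \<mu> = 0"
    proof (cases "\<mu> \<in> Par (?a - 1)")
      case True then show ?thesis using A y ye by auto
    next
      case False
      then have y4: "(\<sigma>,\<mu>) \<in> ?S4" using y ye by auto
      then have "h (\<sigma>,\<mu>) \<in> h ` ?S4" by blast
      then have "c' \<sigma> (tl \<mu>) = 0" using z4 by (auto simp: h_def)
      then show ?thesis using cc[OF y4] by simp
    qed
    then show "case y of (\<sigma>,\<mu>) \<Rightarrow> c \<sigma> \<mu> = 0" using ye by simp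
  qed
qed

lemma G: "finite X \<Longrightarrow> finite Z \<Longrightarrow> X \<inter> Z = {} \<Longrightarrow> indep X Z"
proof (induction "card X + card Z" arbitrary: X Z rule: less_induct)
  case less
  show ?case unfolding indep_def
  proof (intro allI impI)
    fix S c assume R: "rel X Z S c"
    then have "finite S" by (simp add: rel_def)
    then have "finite (length ` snd ` S)" by simp
    then obtain n where n: "\<forall>l\<in>length ` snd ` S. l \<le> n"
      using finite_nat_set_iff_bounded_le by blast
    then have "\<forall>(\<sigma>,\<mu>)\<in>S. length \<mu> \<le> n" by fastforce
    then show "\<forall>(\<sigma>,\<mu>)\<in>S. c \<sigma> \<mu> = 0"
      using inner[OF less.prems, of S c n] less.hyps less.prems R by blast
  qed
qed


lemma esym_0: "finite V \<Longrightarrow> esym V 0 = 1"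
proof -
  assume f: "finite V"
  have e: "{T. T \<subseteq> V \<and> card T = 0} = {{}}"
    using f by (auto dest: finite_subset)
  show ?thesis unfolding esym_def e by simp
qed

lemma esym_seq_filter: "finite V \<Longrightarrow> esym_seq V (filter (\<lambda>x. x \<noteq> 0) p) = esym_seq V p"
  by (induction p) (auto simp: esym_0)

lemma sum_list_filter_nz: "sum_list (filter (\<lambda>x. x \<noteq> 0) p) = sum_list (p :: nat list)"
  by (induction p) auto

lemma zero_split:
  "sorted_wrt (\<ge>) (xs :: nat list) \<Longrightarrow>
     xs = filter (\<lambda>x. x \<noteq> 0) xs @ replicate (length xs - length (filter (\<lambda>x. x \<noteq> 0) xs)) 0"
proof (induction xs)
  case Nil then show ?case by simp
next
  case (Cons x xs)
  show ?case
  proof (cases "x = 0")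
    case True
    then have "\<forall>y\<in>set xs. y = 0" using Cons.prems by auto
    then have "filter (\<lambda>x. x \<noteq> 0) xs = []" "xs = replicate (length xs) 0"
      by (auto simp: filter_empty_conv intro: replicate_eqI)
    then show ?thesis using True by simp
  next
    case False
    have "length (filter (\<lambda>x. x \<noteq> 0) xs) \<le> length xs" by simp
    then show ?thesis using False Cons by (simp add: Suc_diff_le)
  qed
qed

lemma prefix_sums_eq:
  "(\<forall>i. sum_list (take i p) = sum_list (take i (q :: nat list))) \<Longrightarrow> (\<forall>x\<in>set p. 0 < x) \<Longrightarrow> (\<forall>x\<in>set q. 0 < x) \<Longrightarrow> p = q"
proof (induction p arbitrary: q)
  case Nil
  show ?case
  proof (cases q)
    case (Cons y ys)
    then show ?thesis using Nil.prems(1)[rule_format, of 1] Nil.prems(3) by auto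
  qed simp
next
  case (Cons x xs)
  show ?case
  proof (cases q)
    case Nil
    then show ?thesis using Cons.prems(1)[rule_format, of 1] Cons.prems(2) by auto
  next
    case (Cons y ys)
    have xy: "x = y" using Cons.prems(1)[rule_format, of 1] Cons by simp
    have "\<forall>i. sum_list (take i xs) = sum_list (take i ys)"
    proof
      fix i show "sum_list (take i xs) = sum_list (take i ys)"
        using Cons.prems(1)[rule_format, of "Suc i"] Cons xy by simp
    qed
    then have "xs = ys" using Cons.IH Cons.prems Cons by auto
    then show ?thesis using xy Cons by simp
  qed
qed

definition fval :: "nat \<Rightarrow> nat list \<Rightarrow> nat" where
  "fval K p = (\<Sum>i\<le>K. sum_list (take i p))"

lemma fval_less:
  assumes "\<forall>x\<in>set p. 0 < x" "\<forall>x\<in>set q. 0 < x" "length p \<le> K" "length q \<le> K" "p \<noteq> q"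
    "\<forall>i. sum_list (take i q) \<le> sum_list (take i p)"
  shows "fval K q < fval K p"
  unfolding fval_def
proof (rule sum_strict_mono_ex1)
  show "finite {..K}" by simp
  show "\<forall>i\<in>{..K}. sum_list (take i q) \<le> sum_list (take i p)" using assms(6) by blast
  show "\<exists>i\<in>{..K}. sum_list (take i q) < sum_list (take i p)"
  proof (rule ccontr)
    assume "\<not> ?thesis"
    then have eqK: "\<forall>i\<le>K. sum_list (take i q) = sum_list (take i p)"
      using assms(6) le_neq_implies_less by fastforce
    have "\<forall>i. sum_list (take i p) = sum_list (take i q)"
    proof
      fix i show "sum_list (take i p) = sum_list (take i q)"
      proof (cases "i \<le> K")
        case True then show ?thesis using eqK by simp
      next
        case False
        then have "take i p = take K p" "take i q = take K q" using assms(3,4) by auto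
        then show ?thesis using eqK by simp
      qed
    qed
    then show False using prefix_sums_eq assms(1,2,5) by blast
  qed
qed

lemma dom_length:
  assumes "\<forall>x\<in>set p. 0 < x" "sum_list p = sum_list (q :: nat list)"
    "sum_list (take (length q) q) \<le> sum_list (take (length q) p)"
  shows "length p \<le> length q"
proof (rule ccontr)
  assume "\<not> ?thesis"
  then have "drop (length q) p \<noteq> []" by simp
  then obtain y where "y \<in> set (drop (length q) p)" by (cases "drop (length q) p") auto
  then have "0 < y" "y \<in> set (drop (length q) p)" using assms(1) by (auto dest: in_set_dropD)
  then have "0 < sum_list (drop (length q) p)"
    by (metis elem_le_sum_list in_set_conv_nth gr_zeroI le_zero_eq)
  moreover have "sum_list p = sum_list (take (length q) p) + sum_list (drop (length q) p)"
    by (metis append_take_drop_id sum_list_append)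
  moreover have "sum_list (take (length q) q) = sum_list q" by simp
  ultimately show False using assms(2,3) by linarith
qed


definition tau :: "nat list \<Rightarrow> nat list" where
  "tau lam = nonzero_parts (shifted lam)"

lemma SPar_gap:
  assumes "lam \<in> SPar a k"
  shows "i + d < k \<Longrightarrow> lam ! (i + d) + d \<le> lam ! i"
proof (induction d)
  case 0 then show ?case by simp
next
  case (Suc d)
  have s: "sorted_wrt (>) lam" "length lam = k" using assms by (auto simp: SPar_def)
  have "lam ! (i + Suc d) < lam ! (i + d)"
    using s Suc.prems by (auto simp: sorted_wrt_iff_nth_less)
  then show ?case using Suc by simp
qed

lemma SPar_lower:
  assumes "lam \<in> SPar a k" "i < k"
  shows "k - i \<le> lam ! i"
proof -
  have l: "length lam = k" "\<forall>x\<in>set lam. 1 \<le> x" using assms by (auto simp: SPar_def)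
  have "1 \<le> lam ! (k - 1)" using l assms(2) by (metis diff_less less_nat_zero_code nat_neq_iff nth_mem zero_less_one)
  moreover have "lam ! (i + (k - 1 - i)) + (k - 1 - i) \<le> lam ! i"
    using SPar_gap[OF assms(1), of i "k - 1 - i"] assms(2) by simp
  moreover have "i + (k - 1 - i) = k - 1" using assms(2) by simp
  ultimately show ?thesis by simp
qed

lemma SPar_upper:
  assumes "lam \<in> SPar a k" "i < k"
  shows "lam ! i + i \<le> a"
proof -
  have l: "length lam = k" "\<forall>x\<in>set lam. x \<le> a" using assms by (auto simp: SPar_def)
  have "lam ! 0 \<le> a" using l assms(2) by auto
  moreover have "lam ! (0 + i) + i \<le> lam ! 0"
    using SPar_gap[OF assms(1), of 0 i] assms(2) by simp
  ultimately show ?thesis by simp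
qed

lemma shifted_length [simp]: "length (shifted lam) = length lam"
  by (simp add: shifted_def)

lemma shifted_nth: "i < length lam \<Longrightarrow> shifted lam ! i = lam ! i - (length lam - i)"
  by (simp add: shifted_def)

lemma shifted_sorted:
  assumes "lam \<in> SPar a k"
  shows "sorted_wrt (\<ge>) (shifted lam)"
proof -
  have l: "length lam = k" using assms by (auto simp: SPar_def)
  show ?thesis unfolding sorted_wrt_iff_nth_less
  proof (intro allI impI)
    fix i j assume ij: "i < j" "j < length (shifted lam)"
    then have jk: "j < k" using l by simp
    have g: "lam ! (i + (j - i)) + (j - i) \<le> lam ! i"
      using SPar_gap[OF assms, of i "j - i"] ij jk by simp
    have "i + (j - i) = j" using ij by simp
    then have g': "lam ! j + (j - i) \<le> lam ! i" using g by simp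
    have lo: "k - j \<le> lam ! j" using SPar_lower[OF assms jk] .
    show "shifted lam ! j \<le> shifted lam ! i"
      using shifted_nth[of j lam] shifted_nth[of i lam] ij jk l g' lo by simp
  qed
qed

lemma shifted_le:
  assumes "lam \<in> SPar a k" "x \<in> set (shifted lam)"
  shows "x \<le> a - k"
proof -
  have l: "length lam = k" using assms by (auto simp: SPar_def)
  obtain i where i: "i < k" "x = shifted lam ! i" using assms(2) l by (auto simp: in_set_conv_nth)
  have "lam ! i + i \<le> a" using SPar_upper[OF assms(1) i(1)] .
  then show ?thesis using i shifted_nth[of i lam] l by simp
qed

lemma tau_box:
  assumes "lam \<in> SPar a k"
  shows "tau lam \<in> box k (a - k)"
proof -
  have l: "length lam = k" using assms by (auto simp: SPar_def)
  have "sorted_wrt (\<ge>) (tau lam)"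
    unfolding tau_def nonzero_parts_def using shifted_sorted[OF assms] by (simp add: sorted_wrt_filter)
  moreover have "\<forall>x\<in>set (tau lam). 0 < x" by (auto simp: tau_def nonzero_parts_def)
  moreover have "length (tau lam) \<le> k"
    unfolding tau_def nonzero_parts_def using l by (metis length_filter_le shifted_length)
  moreover have "\<forall>x\<in>set (tau lam). x \<le> a - k"
    using shifted_le[OF assms] by (auto simp: tau_def nonzero_parts_def)
  ultimately show ?thesis by (auto simp: box_def is_partition_def)
qed

lemma tau_inj: "inj_on tau (SPar a k)"
proof (rule inj_onI)
  fix l1 l2 assume l1: "l1 \<in> SPar a k" and l2: "l2 \<in> SPar a k" and eq: "tau l1 = tau l2"
  have len: "length l1 = k" "length l2 = k" using l1 l2 by (auto simp: SPar_def)
  have "shifted l1 = shifted l2"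
    using zero_split[OF shifted_sorted[OF l1]] zero_split[OF shifted_sorted[OF l2]] eq len
    unfolding tau_def nonzero_parts_def by (metis shifted_length)
  show "l1 = l2"
  proof (rule nth_equalityI)
    show "length l1 = length l2" using len by simp
    fix i assume "i < length l1"
    then have i: "i < k" using len by simp
    have "shifted l1 ! i = shifted l2 ! i" using \<open>shifted l1 = shifted l2\<close> by simp
    then have "l1 ! i - (k - i) = l2 ! i - (k - i)" using shifted_nth len i by simp
    then show "l1 ! i = l2 ! i" using SPar_lower[OF l1 i] SPar_lower[OF l2 i] by simp
  qed
qed

lemma finite_box: "finite (box k m)"
proof -
  have "box k m \<subseteq> {xs. set xs \<subseteq> {0..m} \<and> length xs \<le> k}"
    by (auto simp: box_def)
  then show ?thesis using finite_lists_length_le[of "{0..m}" k] finite_subset by blast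
qed


theorem mainTheorem13:
  fixes a k :: nat
    and g :: "nat list \<Rightarrow> mpoly_int"
    and N :: "nat list \<Rightarrow> nat list set"
    and d :: "nat list \<Rightarrow> nat list \<Rightarrow> int"
  assumes "1 \<le> k" and "k \<le> a"
    and "\<And>lam. lam \<in> SPar a k \<Longrightarrow> finite (N lam)"
    and "\<And>lam \<nu>. lam \<in> SPar a k \<Longrightarrow> \<nu> \<in> N lam \<Longrightarrow>
           is_partition \<nu> \<and> sum_list \<nu> = sum_list (shifted lam) \<and>
           strictly_dominates \<nu> (shifted lam)"
    and "\<And>lam. lam \<in> SPar a k \<Longrightarrow>
           g lam = esym_seq {k+1..a} (shifted lam)
                   + (\<Sum>\<nu>\<in>N lam. of_int (d lam \<nu>) * esym_seq {k+1..a} \<nu>)"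
  shows "\<And>S c. finite S \<Longrightarrow> S \<subseteq> SPar a k \<times> Par a \<Longrightarrow>
           (\<Sum>(lam, \<mu>)\<in>S. of_int (c lam \<mu>) * (g lam * esym_seq {1..a} \<mu>)) = (0 :: mpoly_int) \<Longrightarrow>
           (\<forall>(lam, \<mu>)\<in>S. c lam \<mu> = (0::int))"
proof -
  fix S c
  assume fS: "finite S" and Ssub: "S \<subseteq> SPar a k \<times> Par a"
    and sum0: "(\<Sum>(lam, \<mu>)\<in>S. of_int (c lam \<mu>) * (g lam * esym_seq {1..a} \<mu>)) = (0 :: mpoly_int)"
  note finN = assms(3) and domN = assms(4) and gdef = assms(5)
  define m where "m = a - k"
  define X where "X = {1..k}"
  define Z where "Z = {k+1..a}"
  define B where "B = box k m"
  define P where "P = snd ` S"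
  have fX: "finite X" and fZ: "finite Z" and dj: "X \<inter> Z = {}" by (auto simp: X_def Z_def)
  have cX: "card X = k" and cZ: "card Z = m" by (auto simp: X_def Z_def m_def)
  have XZ: "X \<union> Z = {1..a}" using assms(2) by (auto simp: X_def Z_def)
  have fB: "finite B" by (simp add: B_def finite_box)
  have fP: "finite P" using fS by (simp add: P_def)
  define coef where "coef lam \<tau> = (if \<tau> = tau lam then 1 else 0) + (if \<tau> \<in> N lam then d lam \<tau> else 0)"
    for lam \<tau>
  have tauB: "tau lam \<in> B" if "lam \<in> SPar a k" for lam
    using tau_box[OF that] by (simp add: B_def m_def)
  have taupos: "\<forall>x\<in>set (tau lam). 0 < x" for lam
    by (auto simp: tau_def nonzero_parts_def)
  have taulen: "length (tau lam) \<le> k" if "lam \<in> SPar a k" for lam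
    using tauB[OF that] by (simp add: B_def box_def)
  have nupos: "\<forall>x\<in>set \<nu>. 0 < x" if "lam \<in> SPar a k" "\<nu> \<in> N lam" for lam \<nu>
    using domN[OF that] by (simp add: is_partition_def)
  have nunz: "nonzero_parts \<nu> = \<nu>" if "lam \<in> SPar a k" "\<nu> \<in> N lam" for lam \<nu>
    using nupos[OF that] by (auto simp: nonzero_parts_def intro: filter_True)
  have D1: "\<nu> \<noteq> tau lam" if "lam \<in> SPar a k" "\<nu> \<in> N lam" for lam \<nu>
    using domN[OF that] nunz[OF that] by (simp add: strictly_dominates_def tau_def)
  have Dps: "\<forall>i. sum_list (take i (tau lam)) \<le> sum_list (take i \<nu>)" if "lam \<in> SPar a k" "\<nu> \<in> N lam" for lam \<nu>
    using domN[OF that] nunz[OF that] by (simp add: strictly_dominates_def tau_def)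
  have D2: "length \<nu> \<le> k" if "lam \<in> SPar a k" "\<nu> \<in> N lam" for lam \<nu>
  proof -
    have "sum_list \<nu> = sum_list (tau lam)"
      using domN[OF that] sum_list_filter_nz[of "shifted lam"] by (simp add: tau_def nonzero_parts_def)
    then have "length \<nu> \<le> length (tau lam)"
      using dom_length[OF nupos[OF that]] Dps[OF that] by blast
    then show ?thesis using taulen[OF that(1)] by simp
  qed
  have D3: "fval k (tau lam) < fval k \<nu>" if "lam \<in> SPar a k" "\<nu> \<in> N lam" for lam \<nu>
    by (rule fval_less[OF nupos[OF that] taupos D2[OF that] taulen[OF that(1)] D1[OF that] Dps[OF that]])
  have D4: "esym_seq Z \<nu> = 0" if "lam \<in> SPar a k" "\<nu> \<in> N lam" "\<nu> \<notin> B" for lam \<nu>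
  proof -
    have "\<not> (\<forall>x\<in>set \<nu>. x \<le> m)"
      using that domN[OF that(1,2)] D2[OF that(1,2)] by (auto simp: B_def box_def)
    then obtain x where "x \<in> set \<nu>" "m < x" by auto
    then show ?thesis using esym_seq_big[OF fZ] cZ by auto
  qed
  have g_exp: "g lam = (\<Sum>\<tau>\<in>B. of_int (coef lam \<tau>) * esym_seq Z \<tau>)" if lS: "lam \<in> SPar a k" for lam
  proof -
    have "(\<Sum>\<tau>\<in>B. of_int (coef lam \<tau>) * esym_seq Z \<tau>) =
          (\<Sum>\<tau>\<in>B. (if \<tau> = tau lam then esym_seq Z \<tau> else 0) +
                   (if \<tau> \<in> N lam then of_int (d lam \<tau>) * esym_seq Z \<tau> else 0))"
      by (rule sum.cong[OF refl]) (simp add: coef_def distrib_right)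
    also have "\<dots> = esym_seq Z (tau lam) + (\<Sum>\<tau>\<in>B \<inter> N lam. of_int (d lam \<tau>) * esym_seq Z \<tau>)"
      using fB tauB[OF lS] by (simp add: sum.distrib sum.inter_restrict)
    also have "(\<Sum>\<tau>\<in>B \<inter> N lam. of_int (d lam \<tau>) * esym_seq Z \<tau>) = (\<Sum>\<nu>\<in>N lam. of_int (d lam \<nu>) * esym_seq Z \<nu>)"
      by (rule sum.mono_neutral_left) (use finN[OF lS] D4[OF lS] in auto)
    also have "esym_seq Z (tau lam) = esym_seq Z (shifted lam)"
      using esym_seq_filter[OF fZ] by (simp add: tau_def nonzero_parts_def)
    finally show ?thesis using gdef[OF lS] by (simp add: Z_def)
  qed
  define C where "C \<tau> \<mu> = (\<Sum>y\<in>S. if snd y = \<mu> then c (fst y) \<mu> * coef (fst y) \<tau> else 0)" for \<tau> \<mu>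
  let ?E = "\<lambda>\<tau> \<mu>. esym_seq Z \<tau> * esym_seq (X \<union> Z) \<mu>"
  have H: "(\<Sum>(\<tau>,\<mu>)\<in>B \<times> P. of_int (C \<tau> \<mu>) * ?E \<tau> \<mu>) = 0"
  proof -
    have "(\<Sum>(\<tau>,\<mu>)\<in>B \<times> P. of_int (C \<tau> \<mu>) * ?E \<tau> \<mu>) =
          (\<Sum>p\<in>B \<times> P. \<Sum>y\<in>S. if snd y = snd p then of_int (c (fst y) (snd p) * coef (fst y) (fst p)) * ?E (fst p) (snd p) else 0)"
      by (rule sum.cong[OF refl]) (auto simp: C_def of_int_sum sum_distrib_right intro!: sum.cong)
    also have "\<dots> = (\<Sum>y\<in>S. \<Sum>p\<in>B \<times> P. if snd y = snd p then of_int (c (fst y) (snd p) * coef (fst y) (fst p)) * ?E (fst p) (snd p) else 0)"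
      by (rule sum.swap)
    also have "\<dots> = (\<Sum>y\<in>S. \<Sum>\<tau>\<in>B. of_int (c (fst y) (snd y) * coef (fst y) \<tau>) * ?E \<tau> (snd y))"
    proof (rule sum.cong[OF refl])
      fix y assume y: "y \<in> S"
      then have yP: "snd y \<in> P" by (simp add: P_def)
      have "(\<Sum>p\<in>B \<times> P. if snd y = snd p then of_int (c (fst y) (snd p) * coef (fst y) (fst p)) * ?E (fst p) (snd p) else 0) =
            (\<Sum>\<tau>\<in>B. \<Sum>\<mu>\<in>P. if snd y = \<mu> then of_int (c (fst y) \<mu> * coef (fst y) \<tau>) * ?E \<tau> \<mu> else 0)"
        by (simp add: sum.cartesian_product case_prod_beta)
      also have "\<dots> = (\<Sum>\<tau>\<in>B. of_int (c (fst y) (snd y) * coef (fst y) \<tau>) * ?E \<tau> (snd y))"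
        using fP yP by (simp add: sum.delta)
      finally show "(\<Sum>p\<in>B \<times> P. if snd y = snd p then of_int (c (fst y) (snd p) * coef (fst y) (fst p)) * ?E (fst p) (snd p) else 0) =
            (\<Sum>\<tau>\<in>B. of_int (c (fst y) (snd y) * coef (fst y) \<tau>) * ?E \<tau> (snd y))" .
    qed
    also have "\<dots> = (\<Sum>y\<in>S. of_int (c (fst y) (snd y)) * (g (fst y) * esym_seq {1..a} (snd y)))"
    proof (rule sum.cong[OF refl])
      fix y assume y: "y \<in> S"
      then have lS: "fst y \<in> SPar a k" using Ssub by auto
      show "(\<Sum>\<tau>\<in>B. of_int (c (fst y) (snd y) * coef (fst y) \<tau>) * ?E \<tau> (snd y)) =
            of_int (c (fst y) (snd y)) * (g (fst y) * esym_seq {1..a} (snd y))"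
        unfolding g_exp[OF lS] XZ by (simp add: sum_distrib_left sum_distrib_right ac_simps)
    qed
    also have "\<dots> = 0" using sum0 by (simp add: case_prod_beta)
    finally show ?thesis .
  qed
  have "rel X Z (B \<times> P) C"
    unfolding rel_def
  proof (intro conjI)
    show "finite (B \<times> P)" using fB fP by simp
    have "P \<subseteq> Par a" using Ssub by (auto simp: P_def)
    then show "B \<times> P \<subseteq> box (card X) (card Z) \<times> Par (card X + card Z)"
      using cX cZ assms(2) by (auto simp: B_def m_def)
    show "(\<Sum>(\<tau>,\<mu>)\<in>B \<times> P. of_int (C \<tau> \<mu>) * (esym_seq Z \<tau> * esym_seq (X \<union> Z) \<mu>)) = 0"
      using H by simp
  qed
  then have C0: "\<forall>(\<tau>,\<mu>)\<in>B \<times> P. C \<tau> \<mu> = 0"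
    using G[OF fX fZ dj] by (auto simp: indep_def)
  show "\<forall>(lam, \<mu>)\<in>S. c lam \<mu> = 0"
  proof (rule ccontr)
    assume "\<not> ?thesis"
    then obtain y1 where y1: "y1 \<in> S" "c (fst y1) (snd y1) \<noteq> 0" by auto
    let ?W = "\<lambda>y. y \<in> S \<and> c (fst y) (snd y) \<noteq> 0"
    obtain y0 where y0: "?W y0" and ymin: "\<forall>y. ?W y \<longrightarrow> fval k (tau (fst y0)) \<le> fval k (tau (fst y))"
      using ex_has_least_nat[of ?W y1 "\<lambda>y. fval k (tau (fst y))"] y1 by blast
    obtain lam0 \<mu>0 where y0e: "y0 = (lam0, \<mu>0)" by fastforce
    have l0: "lam0 \<in> SPar a k" using y0 y0e Ssub by auto
    have "C (tau lam0) \<mu>0 = c lam0 \<mu>0"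
    proof -
      let ?h = "\<lambda>y. if snd y = \<mu>0 then c (fst y) \<mu>0 * coef (fst y) (tau lam0) else 0"
      have "C (tau lam0) \<mu>0 = ?h y0 + sum ?h (S - {y0})"
        unfolding C_def by (rule sum.remove[OF fS]) (use y0 in blast)
      moreover have "?h y0 = c lam0 \<mu>0"
        using y0e D1[OF l0] by (auto simp: coef_def)
      moreover have "sum ?h (S - {y0}) = 0"
      proof (rule sum.neutral, rule ballI)
        fix y assume y: "y \<in> S - {y0}"
        obtain lam \<mu> where ye: "y = (lam, \<mu>)" by fastforce
        have lS: "lam \<in> SPar a k" using y ye Ssub by auto
        show "?h y = 0"
        proof (cases "\<mu> = \<mu>0 \<and> c lam \<mu>0 \<noteq> 0")
          case True
          then have "lam \<noteq> lam0" using y ye y0e by auto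
          then have ne: "tau lam0 \<noteq> tau lam" using tau_inj[of a k] l0 lS by (auto dest: inj_onD)
          have "fval k (tau lam0) \<le> fval k (tau lam)" using ymin y ye True y0e by auto
          then have "tau lam0 \<notin> N lam" using D3[OF lS] by fastforce
          then show ?thesis using ne ye by (simp add: coef_def)
        next
          case False
          then show ?thesis using ye by auto
        qed
      qed
      ultimately show ?thesis by simp
    qed
    moreover have "C (tau lam0) \<mu>0 = 0"
    proof -
      have "(tau lam0, \<mu>0) \<in> B \<times> P" using tauB[OF l0] y0 y0e by (force simp: P_def)
      then show ?thesis using C0 by auto
    qed
    ultimately show False using y0 y0e by simp
  qed
qed

end
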